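(* Let $K\in\mathbb R$ and let $Q$ be a polynomial of the form $$Q(z)=-\frac14z^4+\frac K2z^2+iz+C$$ for some constant $C$, which can also be written as $$Q(z)=-\frac14(z-z_1)(z-z_2)(z-z_0)^2,\qquad z_0=-ai,\quad z_1=-b+ci,\quad z_2=b+ci,$$ with real parameters $a,b,c$ and $b>0$. Then $b$ is the unique positive real root of $b^6-2Kb^4-8=0$, the parameters $a$ and $c$ satisfy $a=c=\frac{2}{b^2}$, and $C=-\frac{b^6+4}{b^8}$. *)

theory Defs
  imports Complex_Main
begin

end

theory Submission
  imports Defs
begin

lemma cubic_zero:
  fixes e3 e2 e1 e0 :: complex
  assumes "\<And>z. e3*z^3+e2*z^2+e1*z+e0 = 0"
  shows "e3 = 0 \<and> e2 = 0 \<and> e1 = 0 \<and> e0 = 0"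
proof -
  have h0: "e0 = 0" using assms[of 0] by simp
  have h1: "e3+e2+e1 = 0" using assms[of 1] h0 by simp
  have h2: "-e3+e2-e1 = 0" using assms[of "-1"] h0 by simp
  have h3: "8*e3+4*e2+2*e1 = 0" using assms[of 2] h0 by (simp add: mult.commute)
  have "2*e2 = (e3+e2+e1) + (-e3+e2-e1)" by simp
  also have "\<dots> = 0" using h1 h2 by simp
  finally have e2: "e2 = 0" by simp
  have "e1 = (e3+e2+e1) - e3 - e2" by simp
  hence e1: "e1 = -e3" using h1 e2 by (simp add: eq_neg_iff_add_eq_0 add.commute)
  have "6*e3 = 0" using h3 e2 e1 by simp
  hence "e3 = 0" by simp
  thus ?thesis using e1 e2 h0 by simp
qed

theorem lemma3p1:
  fixes K a b c :: real and C :: complex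
  assumes hQ: "\<forall>z::complex.
      - (1/4) * z^4 + complex_of_real K / 2 * z^2 + \<i> * z + C
      = - (1/4) * (z - Complex (-b) c) * (z - Complex b c) * (z - Complex 0 (-a))^2"
    and hb: "b > 0"
  shows "b^6 - 2*K*b^4 - 8 = 0
         \<and> (\<forall>x::real. x > 0 \<and> x^6 - 2*K*x^4 - 8 = 0 \<longrightarrow> x = b)
         \<and> a = 2 / b^2 \<and> c = 2 / b^2
         \<and> C = complex_of_real (- (b^6 + 4) / b^8)"
proof -
  define A where "A = complex_of_real a"
  define B where "B = complex_of_real b"
  define Cc where "Cc = complex_of_real c"
  define Kc where "Kc = complex_of_real K"
  have eqs: "Complex (-b) c = - B + \<i>*Cc" "Complex b c = B + \<i>*Cc" "Complex 0 (-a) = -\<i>*A"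
    by (simp_all add: Complex_eq A_def B_def Cc_def)
  have "\<And>z. ((1/4)*(2*\<i>*A - 2*\<i>*Cc)) * z^3
     + (Kc/2 + (1/4)*(- (A^2) + 4*A*Cc - (B^2+Cc^2))) * z^2
     + (\<i> + (1/4)*(2*\<i>*Cc*A^2 - 2*\<i>*A*(B^2+Cc^2))) * z
     + (C + (1/4) * A^2*(B^2+Cc^2)) = 0"
  proof -
    fix z
    have "- (1/4) * z^4 + Kc / 2 * z^2 + \<i> * z + C
      = - (1/4) * (z - (- B + \<i>*Cc)) * (z - (B + \<i>*Cc)) * (z - (-\<i>*A))^2"
      using hQ eqs Kc_def by metis
    moreover have ii: "\<i>^2 = -1" by simp
    ultimately show "?thesis z" by algebra
  qed
  note cz = cubic_zero[OF this]
  from cz have cz3: "(1/4)*(2*\<i>*A - 2*\<i>*Cc) = 0"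
    and cz2: "Kc/2 + (1/4)*(- (A^2) + 4*A*Cc - (B^2+Cc^2)) = 0"
    and cz1: "\<i> + (1/4)*(2*\<i>*Cc*A^2 - 2*\<i>*A*(B^2+Cc^2)) = 0"
    and cz0: "C + (1/4) * A^2*(B^2+Cc^2) = 0" by blast+
  have ac: "c = a" using arg_cong[OF cz3, of Im] unfolding A_def Cc_def by simp
  have r2: "a*c + K/2 = a*a/4 + (b*b/4 + c*c/4)" using arg_cong[OF cz2, of Re]
    unfolding A_def B_def Cc_def Kc_def by (simp add: power2_eq_square algebra_simps)
  have r1: "1 + a*(a*c)/2 = a*(b*b)/2 + a*(c*c)/2" using arg_cong[OF cz1, of Im]
    unfolding A_def B_def Cc_def Kc_def by (simp add: power2_eq_square algebra_simps)
  have r0: "Re C + (a*(a*(b*b))/4 + a*(a*(c*c))/4) = 0" using arg_cong[OF cz0, of Re]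
    unfolding A_def B_def Cc_def Kc_def by (simp add: power2_eq_square algebra_simps)
  have hIm: "Im C = 0" using arg_cong[OF cz0, of Im]
    unfolding A_def B_def Cc_def Kc_def by (simp add: power2_eq_square algebra_simps)
  have hK: "K = b^2/2 - a^2" using r2 unfolding ac by (simp add: power2_eq_square)
  have hab: "a*b^2 = 2" using r1 unfolding ac by (simp add: power2_eq_square algebra_simps)
  have hRe: "Re C = -(a^2*(b^2+a^2))/4" using r0 unfolding ac by (simp add: power2_eq_square algebra_simps)
  have b2: "b^2 > 0" using hb by simp
  have ha: "a = 2/b^2" using hab b2 by (simp add: field_simps)
  have f: "\<And>x. x > 0 \<Longrightarrow> x^6 - 2*K*x^4 - 8 = 0 \<Longrightarrow> 2*K = x^2 - 8/x^4"
    by (simp add: field_simps) (simp add: algebra_simps power_numeral_reduce)?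
  have fb: "b^6 - 2*K*b^4 - 8 = 0"
  proof -
    have "b^6 - 2*K*b^4 - 8 = 2*(a*b^2)^2 - 8" unfolding hK by (simp add: algebra_simps power2_eq_square power_numeral_reduce)
    thus ?thesis using hab by simp
  qed
  have uniq: "\<forall>x::real. x > 0 \<and> x^6 - 2*K*x^4 - 8 = 0 \<longrightarrow> x = b"
  proof (intro allI impI)
    fix x :: real assume hx: "x > 0 \<and> x^6 - 2*K*x^4 - 8 = 0"
    have ex: "2*K = x^2 - 8/x^4" using f hx by blast
    have eb: "2*K = b^2 - 8/b^4" using f hb fb by blast
    show "x = b"
    proof (rule ccontr)
      assume "x \<noteq> b"
      hence "x < b \<or> b < x" by linarith
      thus False
      proof
        assume "x < b"
        hence "x^2 < b^2" "x^4 < b^4" using hx by (auto intro: power_strict_mono)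
        hence "8/b^4 < 8/x^4" using hx hb by (intro divide_strict_left_mono) auto
        thus False using ex eb \<open>x^2 < b^2\<close> by linarith
      next
        assume "b < x"
        hence "b^2 < x^2" "b^4 < x^4" using hb by (auto intro: power_strict_mono)
        hence "8/x^4 < 8/b^4" using hb hx by (intro divide_strict_left_mono) auto
        thus False using ex eb \<open>b^2 < x^2\<close> by linarith
      qed
    qed
  qed
  have hC: "C = complex_of_real (- (b^6 + 4) / b^8)"
  proof (rule complex_eqI)
    show "Im C = Im (complex_of_real (- (b^6 + 4) / b^8))" using hIm by simp
    have "Re C = -(a^2*(b^2+a^2))/4" by (rule hRe)
    also have "\<dots> = - (b^6 + 4) / b^8" unfolding ha using hb
      by (simp add: field_simps power2_eq_square power_numeral_reduce)
    finally show "Re C = Re (complex_of_real (- (b^6 + 4) / b^8))" by simp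
  qed
  show ?thesis using fb uniq ha ac hC by simp
qed

end
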